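(* Let $\{Y_k\}$ be a fourth-order stationary sequence with $EY_k=0$, autocovariances $\gamma_j=\mathrm{Cov}(Y_0,Y_j)$ and cumulants $\kappa(h,r,s)$, satisfying: (a) $n^{-1/2}\sum_{1\le j\le nt}Y_j\xrightarrow{d}\sigma W(t)$ in $D[0,1]$ for some $\sigma>0$; (b) $\sum_j|\gamma_j|<\infty$; (c) $\sup_h\sum_{r,s}|\kappa(h,r,s)|<\infty$. For each $n$ let $X_i=\mu+Y_i$ for $1\le i\le k^*$ and $X_i=\mu+\Delta+Y_i$ for $k^*<i\le n$, where $k^*=[n\theta]$ for some $0<\theta<1$, and $\Delta=\Delta(n)$ satisfies $n\Delta^2\to\infty$, $\Delta^2|\hat k-k^*|=O_P(1)$ and $q(n)\Delta^2=O(1)$. Suppose $q(n)\to\infty$ and $q(n)/n\to0$. Then $s_n^2=O_P(1)$.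
   Context: Fourth-order stationary means finite fourth moments and shift-invariant joint moments of order at most four; $\kappa(h,r,s)=E[Y_kY_{k+h}Y_{k+r}Y_{k+s}]-(\gamma_h\gamma_{r-s}+\gamma_r\gamma_{h-s}+\gamma_s\gamma_{h-r})$. $q(n)$ is a sequence of positive integers, $\omega_j(q)=1-j/(q+1)$, $\bar X_n=\frac1n\sum_{i\le n}X_i$, $\hat\gamma_j=\frac1n\sum_{1\le i\le n-j}(X_i-\bar X_n)(X_{i+j}-\bar X_n)$, $s_n^2=\hat\gamma_0+2\sum_{1\le j\le q(n)}\omega_j(q(n))\hat\gamma_j$; $\hat k=\min\{k:\max_{1\le i\le n}|\sum_{j\le i}X_j-\frac in\sum_{j\le n}X_j|=|\sum_{j\le k}X_j-\frac kn\sum_{j\le n}X_j|\}$. *)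

theory Defs
  imports "HOL-Probability.Probability" "HOL-Library.Landau_Symbols"
begin

definition fourth_order_stationary :: "'a measure \<Rightarrow> (int \<Rightarrow> 'a \<Rightarrow> real) \<Rightarrow> bool" where
  "fourth_order_stationary M Y \<longleftrightarrow>
     (\<forall>k. Y k \<in> borel_measurable M) \<and>
     (\<forall>k. integrable M (\<lambda>\<omega>. (Y k \<omega>) ^ 4)) \<and>
     (\<forall>k. (\<integral>\<omega>. Y k \<omega> \<partial>M) = (\<integral>\<omega>. Y 0 \<omega> \<partial>M)) \<and>
     (\<forall>k h. (\<integral>\<omega>. Y k \<omega> * Y (k+h) \<omega> \<partial>M) = (\<integral>\<omega>. Y 0 \<omega> * Y h \<omega> \<partial>M)) \<and>
     (\<forall>k h r. (\<integral>\<omega>. Y k \<omega> * Y (k+h) \<omega> * Y (k+r) \<omega> \<partial>M)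
              = (\<integral>\<omega>. Y 0 \<omega> * Y h \<omega> * Y r \<omega> \<partial>M)) \<and>
     (\<forall>k h r s. (\<integral>\<omega>. Y k \<omega> * Y (k+h) \<omega> * Y (k+r) \<omega> * Y (k+s) \<omega> \<partial>M)
              = (\<integral>\<omega>. Y 0 \<omega> * Y h \<omega> * Y r \<omega> * Y s \<omega> \<partial>M))"

definition autocov :: "'a measure \<Rightarrow> (int \<Rightarrow> 'a \<Rightarrow> real) \<Rightarrow> int \<Rightarrow> real" where
  "autocov M Y j = (\<integral>\<omega>. (Y 0 \<omega> - (\<integral>\<omega>'. Y 0 \<omega>' \<partial>M)) * (Y j \<omega> - (\<integral>\<omega>'. Y j \<omega>' \<partial>M)) \<partial>M)"

definition cum4 :: "'a measure \<Rightarrow> (int \<Rightarrow> 'a \<Rightarrow> real) \<Rightarrow> int \<Rightarrow> int \<Rightarrow> int \<Rightarrow> real" where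
  "cum4 M Y h r s = (\<integral>\<omega>. Y 0 \<omega> * Y h \<omega> * Y r \<omega> * Y s \<omega> \<partial>M)
     - (autocov M Y h * autocov M Y (r - s) + autocov M Y r * autocov M Y (h - s)
        + autocov M Y s * autocov M Y (h - r))"

definition std_brownian_motion :: "'b measure \<Rightarrow> (real \<Rightarrow> 'b \<Rightarrow> real) \<Rightarrow> bool" where
  "std_brownian_motion N W \<longleftrightarrow>
     prob_space N \<and> (\<forall>t. W t \<in> borel_measurable N) \<and>
     (\<forall>\<omega>\<in>space N. W 0 \<omega> = 0 \<and> continuous_on {0..1} (\<lambda>t. W t \<omega>)) \<and>
     (\<forall>(m::nat) (t::nat \<Rightarrow> real). t 0 \<ge> 0 \<and> t m \<le> 1 \<and> (\<forall>i<m. t i < t (Suc i)) \<longrightarrow>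
        prob_space.indep_vars N (\<lambda>_. borel) (\<lambda>i \<omega>. W (t (Suc i)) \<omega> - W (t i) \<omega>) {..<m} \<and>
        (\<forall>i<m. distributed N lborel (\<lambda>\<omega>. W (t (Suc i)) \<omega> - W (t i) \<omega>)
                  (\<lambda>x. ennreal (normal_density 0 (sqrt (t (Suc i) - t i)) x))))"

definition cadlag01 :: "(real \<Rightarrow> real) \<Rightarrow> bool" where
  "cadlag01 x \<longleftrightarrow> (\<forall>t\<in>{0..<1}. (x \<longlongrightarrow> x t) (at_right t)) \<and>
                   (\<forall>t\<in>{0<..1}. \<exists>l. (x \<longlongrightarrow> l) (at_left t))"

definition time_changes :: "(real \<Rightarrow> real) set" where
  "time_changes = {l. strict_mono_on {0..1} l \<and> continuous_on {0..1} l \<and> l ` {0..1} = {0..1}}"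

definition skorokhod_dist :: "(real \<Rightarrow> real) \<Rightarrow> (real \<Rightarrow> real) \<Rightarrow> real" where
  "skorokhod_dist x y = Inf {max (SUP t\<in>{0..1}. \<bar>l t - t\<bar>) (SUP t\<in>{0..1}. \<bar>x t - y (l t)\<bar>) | l. l \<in> time_changes}"

definition skorokhod_continuous :: "((real \<Rightarrow> real) \<Rightarrow> real) \<Rightarrow> bool" where
  "skorokhod_continuous f \<longleftrightarrow> (\<forall>x. cadlag01 x \<longrightarrow> (\<forall>e>0. \<exists>d>0. \<forall>y. cadlag01 y \<longrightarrow>
       skorokhod_dist x y < d \<longrightarrow> \<bar>f y - f x\<bar> < e))"

definition converges_in_dist_D ::
    "'a measure \<Rightarrow> (nat \<Rightarrow> 'a \<Rightarrow> real \<Rightarrow> real) \<Rightarrow> 'b measure \<Rightarrow> ('b \<Rightarrow> real \<Rightarrow> real) \<Rightarrow> bool" where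
  "converges_in_dist_D M S N Z \<longleftrightarrow>
     (\<forall>f. (\<exists>B. \<forall>x. cadlag01 x \<longrightarrow> \<bar>f x\<bar> \<le> B) \<and> skorokhod_continuous f \<longrightarrow>
        (\<lambda>n. \<integral>\<omega>. f (S n \<omega>) \<partial>M) \<longlonglongrightarrow> (\<integral>\<omega>. f (Z \<omega>) \<partial>N))"

definition partial_sum_process :: "(int \<Rightarrow> 'a \<Rightarrow> real) \<Rightarrow> nat \<Rightarrow> 'a \<Rightarrow> real \<Rightarrow> real" where
  "partial_sum_process Y n \<omega> t = (\<Sum>j\<in>{1..\<lfloor>real n * t\<rfloor>}. Y j \<omega>) / sqrt (real n)"

definition bounded_in_prob :: "'a measure \<Rightarrow> (nat \<Rightarrow> 'a \<Rightarrow> real) \<Rightarrow> bool" where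
  "bounded_in_prob M Z \<longleftrightarrow>
     (\<forall>\<epsilon>>0. \<exists>B. \<forall>\<^sub>F n in sequentially. measure M {\<omega>\<in>space M. \<bar>Z n \<omega>\<bar> > B} < \<epsilon>)"

definition sample_mean :: "nat \<Rightarrow> (nat \<Rightarrow> real) \<Rightarrow> real" where
  "sample_mean n x = (\<Sum>i=1..n. x i) / real n"

definition gamma_hat :: "nat \<Rightarrow> (nat \<Rightarrow> real) \<Rightarrow> nat \<Rightarrow> real" where
  "gamma_hat n x j = (\<Sum>i=1..n-j. (x i - sample_mean n x) * (x (i+j) - sample_mean n x)) / real n"

definition bartlett :: "nat \<Rightarrow> nat \<Rightarrow> real" where
  "bartlett q j = 1 - real j / real (q + 1)"

definition lrv_est :: "nat \<Rightarrow> nat \<Rightarrow> (nat \<Rightarrow> real) \<Rightarrow> real" where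
  "lrv_est n q x = gamma_hat n x 0 + 2 * (\<Sum>j=1..q. bartlett q j * gamma_hat n x j)"

definition cusum :: "nat \<Rightarrow> (nat \<Rightarrow> real) \<Rightarrow> nat \<Rightarrow> real" where
  "cusum n x k = (\<Sum>j=1..k. x j) - real k / real n * (\<Sum>j=1..n. x j)"

definition khat :: "nat \<Rightarrow> (nat \<Rightarrow> real) \<Rightarrow> nat" where
  "khat n x = (LEAST k. 1 \<le> k \<and> k \<le> n \<and>
      \<bar>cusum n x k\<bar> = Max ((\<lambda>i. \<bar>cusum n x i\<bar>) ` {1..n}))"

end

theory Submission
  imports Defs
begin

lemma rev_sum_aux: "(\<Sum>l\<le>p. R (Suc p - l)) = (\<Sum>h=1..Suc p. (R h :: real))"
proof (induction p)
  case 0 then show ?case by simp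
next
  case (Suc p)
  have "(\<Sum>l\<le>Suc p. R (Suc (Suc p) - l)) = R (Suc (Suc p)) + (\<Sum>l\<le>p. R (Suc p - l))"
    by (subst sum.atMost_Suc_shift) simp
  also have "\<dots> = (\<Sum>h=1..Suc (Suc p). R h)" using Suc by simp
  finally show ?case .
qed

lemma tri_sum:
  fixes Rp :: "nat \<Rightarrow> nat \<Rightarrow> real" and R :: "nat \<Rightarrow> real"
  assumes eq: "\<And>l m. l \<le> m \<Longrightarrow> m \<le> P \<Longrightarrow> Rp l m = R (m - l)"
    and sym: "\<And>l m. Rp l m = Rp m l"
  shows "p \<le> P \<Longrightarrow> (\<Sum>l\<le>p. \<Sum>m\<le>p. Rp l m) = real (p+1) * R 0 + 2 * (\<Sum>h=1..p. real (p+1-h) * R h)"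
proof (induction p)
  case 0 then show ?case using eq[of 0 0] by simp
next
  case (Suc p)
  have A: "(\<Sum>l\<le>p. Rp l (Suc p)) = (\<Sum>h=1..Suc p. R h)"
    using Suc.prems by (subst rev_sum_aux[symmetric]) (intro sum.cong, auto simp: eq)
  have B: "(\<Sum>m\<le>p. Rp (Suc p) m) = (\<Sum>h=1..Suc p. R h)"
    using A sym by simp
  have "(\<Sum>l\<le>Suc p. \<Sum>m\<le>Suc p. Rp l m) = (\<Sum>l\<le>p. \<Sum>m\<le>p. Rp l m) + (\<Sum>l\<le>p. Rp l (Suc p))
        + (\<Sum>m\<le>p. Rp (Suc p) m) + Rp (Suc p) (Suc p)"
    by (simp add: sum.distrib)
  also have "\<dots> = real (p+1) * R 0 + 2 * (\<Sum>h=1..p. real (p+1-h) * R h) + 2 * (\<Sum>h=1..Suc p. R h) + R 0"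
    using Suc A B eq[of "Suc p" "Suc p"] by simp
  also have "(\<Sum>h=1..Suc p. real (Suc p+1-h) * R h) = (\<Sum>h=1..Suc p. real (p+1-h) * R h + R h)"
    by (intro sum.cong) (auto simp: Suc_diff_le algebra_simps)
  hence "(\<Sum>h=1..Suc p. real (Suc p+1-h) * R h) = (\<Sum>h=1..p. real (p+1-h) * R h) + (\<Sum>h=1..Suc p. R h)"
    by (simp add: sum.distrib)
  ultimately show ?case by (simp add: algebra_simps)
qed

lemma window_eq:
  fixes E :: "int \<Rightarrow> real" and x :: "nat \<Rightarrow> real"
  assumes E: "\<And>i. E i = (if 1 \<le> i \<and> i \<le> int n then x (nat i) - c else 0)"
    and T: "{1 - int l .. int (n-j) - int l} \<subseteq> T" and fin: "finite T"
  shows "(\<Sum>t\<in>T. E (t + int l) * E (t + int l + int j)) = (\<Sum>i=1..n-j. (x i - c) * (x (i+j) - c))"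
proof -
  let ?S = "{1 - int l .. int (n-j) - int l}"
  have "(\<Sum>t\<in>T. E (t + int l) * E (t + int l + int j)) = (\<Sum>t\<in>?S. E (t + int l) * E (t + int l + int j))"
  proof (rule sum.mono_neutral_right[OF fin T])
    show "\<forall>t\<in>T - ?S. E (t + int l) * E (t + int l + int j) = 0"
    proof
      fix t assume "t \<in> T - ?S"
      then have "t + int l < 1 \<or> t + int l + int j > int n" by auto
      then show "E (t + int l) * E (t + int l + int j) = 0" by (auto simp: E)
    qed
  qed
  also have "\<dots> = (\<Sum>i=1..n-j. (x i - c) * (x (i+j) - c))"
    by (rule sum.reindex_bij_witness[of _ "\<lambda>i. int i - int l" "\<lambda>t. nat (t + int l)"])
       (auto simp: E nat_add_distrib)
  finally show ?thesis .
qed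

lemma lrv_nonneg: "0 \<le> lrv_est n q x"
proof (cases "n = 0")
  case True then show ?thesis by (simp add: lrv_est_def gamma_hat_def)
next
  case False
  define c where "c = sample_mean n x"
  define E where "E i = (if 1 \<le> i \<and> i \<le> int n then x (nat i) - c else 0)" for i
  define K where "K = n + q"
  define T where "T = {- int K .. int K}"
  define Rp where "Rp l m = (\<Sum>t\<in>T. E (t + int l) * E (t + int m))" for l m
  define R where "R h = real n * gamma_hat n x h" for h
  have eq: "Rp l m = R (m - l)" if "l \<le> m" "m \<le> q" for l m
  proof -
    have "Rp l m = (\<Sum>t\<in>T. E (t + int l) * E (t + int l + int (m - l)))"
      unfolding Rp_def using that by (intro sum.cong) (auto simp: algebra_simps)
    also have "\<dots> = (\<Sum>i=1..n-(m-l). (x i - c) * (x (i+(m-l)) - c))"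
      by (rule window_eq[OF E_def]) (use that in \<open>auto simp: T_def K_def\<close>)
    finally show ?thesis using False by (simp add: R_def gamma_hat_def c_def)
  qed
  have sym: "Rp l m = Rp m l" for l m unfolding Rp_def by (simp add: mult.commute)
  have tri: "(\<Sum>l\<le>q. \<Sum>m\<le>q. Rp l m) = real (q+1) * R 0 + 2 * (\<Sum>h=1..q. real (q+1-h) * R h)"
    by (rule tri_sum[where P=q and Rp=Rp and R=R, OF eq sym]) auto
  have "real (q+1) * R 0 + 2 * (\<Sum>h=1..q. real (q+1-h) * R h) = real (q+1) * real n * lrv_est n q x"
    unfolding lrv_est_def R_def bartlett_def
    by (simp add: algebra_simps sum_distrib_left sum_distrib_right of_nat_diff) (intro sum.cong; auto simp: field_simps of_nat_diff)
  moreover have "(\<Sum>l\<le>q. \<Sum>m\<le>q. Rp l m) = (\<Sum>t\<in>T. (\<Sum>l\<le>q. E (t + int l))\<^sup>2)"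
    unfolding Rp_def power2_eq_square sum_product
    by (subst sum.swap, rule sum.cong, simp, subst sum.swap, simp)
  moreover have "0 \<le> (\<Sum>t\<in>T. (\<Sum>l\<le>q. E (t + int l))\<^sup>2)" by (intro sum_nonneg) auto
  ultimately have "0 \<le> real (q+1) * real n * lrv_est n q x" using tri by simp
  moreover have "0 < real (q+1) * real n" using False by simp
  ultimately show ?thesis by (simp add: zero_le_mult_iff)
qed

definition sqi :: "'a measure \<Rightarrow> ('a \<Rightarrow> real) \<Rightarrow> bool" where
  "sqi M f \<longleftrightarrow> f \<in> borel_measurable M \<and> integrable M (\<lambda>\<omega>. (f \<omega>)\<^sup>2)"

context
  fixes M :: "'a measure"
  assumes M: "prob_space M"
begin

lemma sqi_const: "sqi M (\<lambda>_. c)"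
proof -
  interpret prob_space M by (rule M)
  show ?thesis by (simp add: sqi_def)
qed

lemma sqi_add: "sqi M f \<Longrightarrow> sqi M g \<Longrightarrow> sqi M (\<lambda>\<omega>. f \<omega> + g \<omega>)"
  unfolding sqi_def
proof (elim conjE, intro conjI)
  assume f: "f \<in> borel_measurable M" "integrable M (\<lambda>\<omega>. (f \<omega>)\<^sup>2)"
     and g: "g \<in> borel_measurable M" "integrable M (\<lambda>\<omega>. (g \<omega>)\<^sup>2)"
  show "(\<lambda>\<omega>. f \<omega> + g \<omega>) \<in> borel_measurable M" using f g by measurable
  show "integrable M (\<lambda>\<omega>. (f \<omega> + g \<omega>)\<^sup>2)"
  proof (rule Bochner_Integration.integrable_bound)
    show "integrable M (\<lambda>\<omega>. 2 * (f \<omega>)\<^sup>2 + 2 * (g \<omega>)\<^sup>2)" using f g by auto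
    show "(\<lambda>\<omega>. (f \<omega> + g \<omega>)\<^sup>2) \<in> borel_measurable M" using f g by measurable
    show "AE \<omega> in M. norm ((f \<omega> + g \<omega>)\<^sup>2) \<le> norm (2 * (f \<omega>)\<^sup>2 + 2 * (g \<omega>)\<^sup>2)"
    proof (intro AE_I2)
      fix \<omega>
      have "0 \<le> (f \<omega> - g \<omega>)\<^sup>2" by simp
      then have "(f \<omega> + g \<omega>)\<^sup>2 \<le> 2 * (f \<omega>)\<^sup>2 + 2 * (g \<omega>)\<^sup>2"
        by (simp add: power2_eq_square algebra_simps)
      then show "norm ((f \<omega> + g \<omega>)\<^sup>2) \<le> norm (2 * (f \<omega>)\<^sup>2 + 2 * (g \<omega>)\<^sup>2)" by simp
    qed
  qed
qed

lemma sqi_scale: "sqi M f \<Longrightarrow> sqi M (\<lambda>\<omega>. a * f \<omega>)"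
  unfolding sqi_def by (auto simp: power_mult_distrib)

lemma sqi_diff: "sqi M f \<Longrightarrow> sqi M g \<Longrightarrow> sqi M (\<lambda>\<omega>. f \<omega> - g \<omega>)"
  using sqi_add[of f "\<lambda>\<omega>. (-1) * g \<omega>"] sqi_scale[of g "-1"] by simp

lemma sqi_sum: "finite A \<Longrightarrow> (\<And>i. i \<in> A \<Longrightarrow> sqi M (f i)) \<Longrightarrow> sqi M (\<lambda>\<omega>. \<Sum>i\<in>A. f i \<omega>)"
  by (induction A rule: finite_induct) (auto intro: sqi_add sqi_const)

lemma sqi_mult: "sqi M f \<Longrightarrow> sqi M g \<Longrightarrow> integrable M (\<lambda>\<omega>. f \<omega> * g \<omega>)"
  unfolding sqi_def
proof (elim conjE)
  assume f: "f \<in> borel_measurable M" "integrable M (\<lambda>\<omega>. (f \<omega>)\<^sup>2)"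
     and g: "g \<in> borel_measurable M" "integrable M (\<lambda>\<omega>. (g \<omega>)\<^sup>2)"
  show "integrable M (\<lambda>\<omega>. f \<omega> * g \<omega>)"
  proof (rule Bochner_Integration.integrable_bound)
    show "integrable M (\<lambda>\<omega>. (f \<omega>)\<^sup>2 + (g \<omega>)\<^sup>2)" using f g by auto
    show "(\<lambda>\<omega>. f \<omega> * g \<omega>) \<in> borel_measurable M" using f g by measurable
    show "AE \<omega> in M. norm (f \<omega> * g \<omega>) \<le> norm ((f \<omega>)\<^sup>2 + (g \<omega>)\<^sup>2)"
    proof (intro AE_I2)
      fix \<omega>
      have "2 * \<bar>f \<omega> * g \<omega>\<bar> \<le> (f \<omega>)\<^sup>2 + (g \<omega>)\<^sup>2"
        using sum_squares_bound[of "\<bar>f \<omega>\<bar>" "\<bar>g \<omega>\<bar>"] by (simp add: abs_mult power2_abs)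
      then show "norm (f \<omega> * g \<omega>) \<le> norm ((f \<omega>)\<^sup>2 + (g \<omega>)\<^sup>2)" by simp
    qed
  qed
qed

lemma sqi_integrable: "sqi M f \<Longrightarrow> integrable M f"
  using sqi_mult[of f "\<lambda>_. 1"] sqi_const by simp

end

context
  fixes M :: "'a measure" and Y :: "int \<Rightarrow> 'a \<Rightarrow> real"
  assumes M: "prob_space M"
    and stat: "fourth_order_stationary M Y"
    and mean0: "\<And>k. (\<integral>\<omega>. Y k \<omega> \<partial>M) = 0"
    and gsum: "(\<lambda>j. \<bar>autocov M Y j\<bar>) summable_on UNIV"
begin

lemma sqi_Y: "sqi M (Y a)"
proof -
  have meas: "Y a \<in> borel_measurable M" and i4: "integrable M (\<lambda>\<omega>. (Y a \<omega>)^4)"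
    using stat by (auto simp: fourth_order_stationary_def)
  have "integrable M (\<lambda>\<omega>. (Y a \<omega>)\<^sup>2)"
  proof (rule Bochner_Integration.integrable_bound)
    interpret prob_space M by (rule M)
    show "integrable M (\<lambda>\<omega>. 1 + (Y a \<omega>)^4)" using i4 by simp
    show "(\<lambda>\<omega>. (Y a \<omega>)\<^sup>2) \<in> borel_measurable M" using meas by measurable
    show "AE \<omega> in M. norm ((Y a \<omega>)\<^sup>2) \<le> norm (1 + (Y a \<omega>)^4)"
    proof (intro AE_I2)
      fix \<omega>
      have "0 \<le> ((Y a \<omega>)\<^sup>2 - 1)\<^sup>2" by simp
      then have "2 * (Y a \<omega>)\<^sup>2 \<le> 1 + (Y a \<omega>)^4" by (simp add: power2_eq_square power4_eq_xxxx algebra_simps)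
      moreover have "0 \<le> (Y a \<omega>)\<^sup>2" by simp
      ultimately have h: "(Y a \<omega>)\<^sup>2 \<le> 1 + (Y a \<omega>)^4" by linarith
      have "0 \<le> (Y a \<omega>)^4" by (simp add: zero_le_even_power)
      then show "norm ((Y a \<omega>)\<^sup>2) \<le> norm (1 + (Y a \<omega>)^4)" using h by simp
    qed
  qed
  then show ?thesis using meas by (simp add: sqi_def)
qed

lemma EYY: "(\<integral>\<omega>. Y a \<omega> * Y b \<omega> \<partial>M) = autocov M Y (b - a)"
proof -
  have "(\<integral>\<omega>. Y a \<omega> * Y (a + (b - a)) \<omega> \<partial>M) = (\<integral>\<omega>. Y 0 \<omega> * Y (b - a) \<omega> \<partial>M)"
    using stat unfolding fourth_order_stationary_def by blast
  then show ?thesis by (simp add: autocov_def mean0)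
qed

definition "GG = (\<Sum>\<^sub>\<infinity>j. \<bar>autocov M Y j\<bar>)"

lemma gsum_bound:
  assumes "finite F" "inj_on \<phi> F"
  shows "(\<Sum>m\<in>F. \<bar>autocov M Y (\<phi> m)\<bar>) \<le> GG"
proof -
  have "(\<Sum>m\<in>F. \<bar>autocov M Y (\<phi> m)\<bar>) = (\<Sum>h\<in>\<phi> ` F. \<bar>autocov M Y h\<bar>)"
    using assms by (simp add: sum.reindex)
  also have "\<dots> \<le> GG" unfolding GG_def
    by (rule finite_sum_le_infsum[OF gsum]) (use assms in auto)
  finally show ?thesis .
qed

lemma GG_nonneg: "0 \<le> GG"
  using gsum_bound[of "{}" id] by simp

lemma EYbar:
  assumes n: "n \<ge> 1"
  shows "\<bar>\<integral>\<omega>. Y a \<omega> * ((\<Sum>k=1..n. Y (int k) \<omega>) / real n) \<partial>M\<bar> \<le> GG / real n"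
proof -
  have "(\<integral>\<omega>. Y a \<omega> * ((\<Sum>k=1..n. Y (int k) \<omega>) / real n) \<partial>M)
      = (\<integral>\<omega>. (\<Sum>k=1..n. Y a \<omega> * Y (int k) \<omega>) / real n \<partial>M)"
    by (simp add: sum_distrib_left)
  also have "\<dots> = (\<Sum>k=1..n. \<integral>\<omega>. Y a \<omega> * Y (int k) \<omega> \<partial>M) / real n"
    by (simp only: integral_divide_zero, subst Bochner_Integration.integral_sum) (auto intro: sqi_mult[OF M] sqi_Y)
  also have "\<dots> = (\<Sum>k=1..n. autocov M Y (int k - a)) / real n"
    by (simp add: EYY)
  finally have eq: "(\<integral>\<omega>. Y a \<omega> * ((\<Sum>k=1..n. Y (int k) \<omega>) / real n) \<partial>M) = (\<Sum>k=1..n. autocov M Y (int k - a)) / real n" .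
  have "\<bar>\<Sum>k=1..n. autocov M Y (int k - a)\<bar> \<le> (\<Sum>k=1..n. \<bar>autocov M Y (int k - a)\<bar>)"
    by (rule sum_abs)
  also have "\<dots> \<le> GG"
    by (rule gsum_bound) (auto simp: inj_on_def)
  finally show ?thesis using n unfolding eq by (simp add: divide_right_mono)
qed

lemma EYbar2:
  assumes n: "n \<ge> 1"
  shows "\<bar>\<integral>\<omega>. ((\<Sum>k=1..n. Y (int k) \<omega>) / real n) * ((\<Sum>k=1..n. Y (int k) \<omega>) / real n) \<partial>M\<bar> \<le> GG / real n"
proof -
  let ?Yb = "\<lambda>\<omega>. (\<Sum>k=1..n. Y (int k) \<omega>) / real n"
  have sYb: "sqi M ?Yb"
    using sqi_scale[OF M sqi_sum[OF M, of "{1..n}" "\<lambda>k. Y (int k)"], of "1 / real n"] sqi_Y by simp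
  have "(\<integral>\<omega>. ?Yb \<omega> * ?Yb \<omega> \<partial>M) = (\<integral>\<omega>. (\<Sum>k=1..n. Y (int k) \<omega> * ?Yb \<omega>) / real n \<partial>M)"
    by (rule Bochner_Integration.integral_cong[OF refl]) (simp add: sum_distrib_right sum_divide_distrib)
  also have "\<dots> = (\<Sum>k=1..n. \<integral>\<omega>. Y (int k) \<omega> * ?Yb \<omega> \<partial>M) / real n"
    by (simp only: integral_divide_zero, subst Bochner_Integration.integral_sum) (use sqi_mult[OF M sqi_Y sYb] in auto)
  finally have eq: "(\<integral>\<omega>. ?Yb \<omega> * ?Yb \<omega> \<partial>M) = (\<Sum>k=1..n. \<integral>\<omega>. Y (int k) \<omega> * ?Yb \<omega> \<partial>M) / real n" .
  have "\<bar>\<Sum>k=1..n. \<integral>\<omega>. Y (int k) \<omega> * ?Yb \<omega> \<partial>M\<bar> \<le> (\<Sum>k=1..n. \<bar>\<integral>\<omega>. Y (int k) \<omega> * ?Yb \<omega> \<partial>M\<bar>)"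
    by (rule sum_abs)
  also have "\<dots> \<le> (\<Sum>k=1..n. GG / real n)"
    by (rule sum_mono) (rule EYbar[OF n])
  also have "\<dots> = GG" using n by simp
  finally show ?thesis using n unfolding eq by (simp add: divide_right_mono)
qed

lemma Elrv:
  assumes n: "n \<ge> 1" and cD: "\<And>i k. \<bar>c i - c k\<bar> \<le> D"
  shows "integrable M (\<lambda>\<omega>. lrv_est n q (\<lambda>i. \<mu> + c i + Y (int i) \<omega>)) \<and>
         (\<integral>\<omega>. lrv_est n q (\<lambda>i. \<mu> + c i + Y (int i) \<omega>) \<partial>M)
            \<le> (2 * real q + 1) * (D\<^sup>2 + 3 * GG / real n) + 2 * GG"
proof -
  define Yb where "Yb \<omega> = (\<Sum>k=1..n. Y (int k) \<omega>) / real n" for \<omega>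
  define cb where "cb = (\<Sum>k=1..n. c k) / real n"
  define a where "a i = c i - cb" for i
  define u where "u i \<omega> = Y (int i) \<omega> - Yb \<omega>" for i \<omega>
  define g where "g = autocov M Y"
  have nz: "real n \<noteq> 0" using n by simp
  have sm: "sample_mean n (\<lambda>i. \<mu> + c i + Y (int i) \<omega>) = \<mu> + cb + Yb \<omega>" for \<omega>
    using nz by (simp add: sample_mean_def sum.distrib cb_def Yb_def field_simps)
  have gh: "gamma_hat n (\<lambda>i. \<mu> + c i + Y (int i) \<omega>) j
      = (\<Sum>i=1..n-j. (a i + u i \<omega>) * (a (i+j) + u (i+j) \<omega>)) / real n" for \<omega> j
    unfolding gamma_hat_def sm by (simp add: a_def u_def algebra_simps)
  have sYb: "sqi M Yb"
    using sqi_scale[OF M sqi_sum[OF M, of "{1..n}" "\<lambda>k. Y (int k)"], of "1 / real n"] sqi_Y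
    by (simp add: Yb_def[abs_def])
  have su: "sqi M (u i)" for i
    unfolding u_def[abs_def] by (intro sqi_diff[OF M] sqi_Y sYb)
  have se: "sqi M (\<lambda>\<omega>. a i + u i \<omega>)" for i
    by (intro sqi_add[OF M] sqi_const[OF M] su)
  have ab: "\<bar>a i\<bar> \<le> D" for i
  proof -
    have "a i = (\<Sum>k=1..n. c i - c k) / real n"
      using nz by (simp add: a_def cb_def sum_subtractf field_simps)
    moreover have "\<bar>\<Sum>k=1..n. c i - c k\<bar> \<le> real n * D"
      using order_trans[OF sum_abs[of "\<lambda>k. c i - c k" "{1..n}"] sum_mono[of "{1..n}" "\<lambda>k. \<bar>c i - c k\<bar>" "\<lambda>_. D"]] cD
      by simp
    ultimately have "real n * \<bar>a i\<bar> \<le> real n * D" using nz by (simp add: abs_mult abs_divide)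
    then show ?thesis using n by simp
  qed
  have EYb: "(\<integral>\<omega>. Yb \<omega> \<partial>M) = 0"
    unfolding Yb_def by (simp only: integral_divide_zero, subst Bochner_Integration.integral_sum)
      (auto intro: sqi_integrable[OF M] sqi_Y simp: mean0)
  have Eu: "(\<integral>\<omega>. u i \<omega> \<partial>M) = 0" for i
    unfolding u_def by (subst Bochner_Integration.integral_diff) (auto intro: sqi_integrable[OF M] sqi_Y sYb simp: EYb mean0)
  have Euu: "\<bar>\<integral>\<omega>. u i \<omega> * u k \<omega> \<partial>M\<bar> \<le> \<bar>g (int k - int i)\<bar> + 3 * GG / real n" for i k
  proof -
    have I: "integrable M (\<lambda>\<omega>. f \<omega> * h \<omega>)" if "sqi M f" "sqi M h" for f h
      using sqi_mult[OF M that] .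
    have "(\<integral>\<omega>. u i \<omega> * u k \<omega> \<partial>M) = (\<integral>\<omega>. Y (int i) \<omega> * Y (int k) \<omega> - Y (int i) \<omega> * Yb \<omega>
            - Y (int k) \<omega> * Yb \<omega> + Yb \<omega> * Yb \<omega> \<partial>M)"
      by (rule Bochner_Integration.integral_cong[OF refl]) (simp add: u_def algebra_simps)
    also have "\<dots> = (\<integral>\<omega>. Y (int i) \<omega> * Y (int k) \<omega> \<partial>M) - (\<integral>\<omega>. Y (int i) \<omega> * Yb \<omega> \<partial>M)
            - (\<integral>\<omega>. Y (int k) \<omega> * Yb \<omega> \<partial>M) + (\<integral>\<omega>. Yb \<omega> * Yb \<omega> \<partial>M)"
      by (simp add: I sqi_Y sYb)
    finally have eq: "(\<integral>\<omega>. u i \<omega> * u k \<omega> \<partial>M) = g (int k - int i) - (\<integral>\<omega>. Y (int i) \<omega> * Yb \<omega> \<partial>M)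
            - (\<integral>\<omega>. Y (int k) \<omega> * Yb \<omega> \<partial>M) + (\<integral>\<omega>. Yb \<omega> * Yb \<omega> \<partial>M)"
      by (simp add: EYY g_def)
    have b1: "\<bar>\<integral>\<omega>. Y (int i) \<omega> * Yb \<omega> \<partial>M\<bar> \<le> GG / real n"
      and b2: "\<bar>\<integral>\<omega>. Y (int k) \<omega> * Yb \<omega> \<partial>M\<bar> \<le> GG / real n"
      and b3: "\<bar>\<integral>\<omega>. Yb \<omega> * Yb \<omega> \<partial>M\<bar> \<le> GG / real n"
      unfolding Yb_def using EYbar[OF n] EYbar2[OF n] by auto
    show ?thesis unfolding eq using b1 b2 b3 by linarith
  qed
  have Eee: "\<bar>\<integral>\<omega>. (a i + u i \<omega>) * (a k + u k \<omega>) \<partial>M\<bar> \<le> D\<^sup>2 + \<bar>g (int k - int i)\<bar> + 3 * GG / real n" for i k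
  proof -
    have "(\<integral>\<omega>. (a i + u i \<omega>) * (a k + u k \<omega>) \<partial>M)
        = (\<integral>\<omega>. a i * a k + a i * u k \<omega> + a k * u i \<omega> + u i \<omega> * u k \<omega> \<partial>M)"
      by (rule Bochner_Integration.integral_cong[OF refl]) (simp add: algebra_simps)
    also have "\<dots> = a i * a k + a i * (\<integral>\<omega>. u k \<omega> \<partial>M) + a k * (\<integral>\<omega>. u i \<omega> \<partial>M) + (\<integral>\<omega>. u i \<omega> * u k \<omega> \<partial>M)"
    proof -
      interpret prob_space M by (rule M)
      show ?thesis by (simp add: sqi_mult[OF M su su] sqi_integrable[OF M su] prob_space)
    qed
    also have "\<dots> = a i * a k + (\<integral>\<omega>. u i \<omega> * u k \<omega> \<partial>M)" by (simp add: Eu)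
    finally have eq: "(\<integral>\<omega>. (a i + u i \<omega>) * (a k + u k \<omega>) \<partial>M) = a i * a k + (\<integral>\<omega>. u i \<omega> * u k \<omega> \<partial>M)" .
    have "\<bar>a i * a k\<bar> \<le> D\<^sup>2"
      using ab[of i] ab[of k] by (simp add: abs_mult power2_eq_square mult_mono')
    then show ?thesis unfolding eq using Euu[of i k] by linarith
  qed
  define b where "b j = D\<^sup>2 + \<bar>g (int j)\<bar> + 3 * GG / real n" for j :: nat
  have b_nonneg: "0 \<le> b j" for j
    unfolding b_def using GG_nonneg n by simp
  have igh: "integrable M (\<lambda>\<omega>. gamma_hat n (\<lambda>i. \<mu> + c i + Y (int i) \<omega>) j)" for j
    unfolding gh by (intro integrable_divide Bochner_Integration.integrable_sum sqi_mult[OF M se se])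
  have Egh: "\<bar>\<integral>\<omega>. gamma_hat n (\<lambda>i. \<mu> + c i + Y (int i) \<omega>) j \<partial>M\<bar> \<le> b j" for j
  proof -
    have eq: "(\<integral>\<omega>. gamma_hat n (\<lambda>i. \<mu> + c i + Y (int i) \<omega>) j \<partial>M)
        = (\<Sum>i=1..n-j. \<integral>\<omega>. (a i + u i \<omega>) * (a (i+j) + u (i+j) \<omega>) \<partial>M) / real n"
      unfolding gh by (simp only: integral_divide_zero, subst Bochner_Integration.integral_sum)
        (auto intro: sqi_mult[OF M se se])
    have "\<bar>\<Sum>i=1..n-j. \<integral>\<omega>. (a i + u i \<omega>) * (a (i+j) + u (i+j) \<omega>) \<partial>M\<bar>
        \<le> (\<Sum>i=1..n-j. \<bar>\<integral>\<omega>. (a i + u i \<omega>) * (a (i+j) + u (i+j) \<omega>) \<partial>M\<bar>)"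
      by (rule sum_abs)
    also have "\<dots> \<le> (\<Sum>i=1..n-j. b j)"
      proof (rule sum_mono)
      fix i show "\<bar>\<integral>\<omega>. (a i + u i \<omega>) * (a (i+j) + u (i+j) \<omega>) \<partial>M\<bar> \<le> b j"
        using Eee[of i "i + j"] by (simp add: b_def)
    qed
    also have "\<dots> = real (n - j) * b j" by simp
    also have "\<dots> \<le> real n * b j" by (intro mult_right_mono b_nonneg) simp
    finally show ?thesis unfolding eq using n by (simp add: field_simps)
  qed
  have lrv: "lrv_est n q (\<lambda>i. \<mu> + c i + Y (int i) \<omega>) = gamma_hat n (\<lambda>i. \<mu> + c i + Y (int i) \<omega>) 0
      + 2 * (\<Sum>j=1..q. bartlett q j * gamma_hat n (\<lambda>i. \<mu> + c i + Y (int i) \<omega>) j)" for \<omega>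
    by (simp add: lrv_est_def)
  have ilrv: "integrable M (\<lambda>\<omega>. lrv_est n q (\<lambda>i. \<mu> + c i + Y (int i) \<omega>))"
    unfolding lrv by (intro Bochner_Integration.integrable_add integrable_mult_right
        Bochner_Integration.integrable_sum igh)
  have "(\<integral>\<omega>. lrv_est n q (\<lambda>i. \<mu> + c i + Y (int i) \<omega>) \<partial>M)
      = (\<integral>\<omega>. gamma_hat n (\<lambda>i. \<mu> + c i + Y (int i) \<omega>) 0 \<partial>M)
        + 2 * (\<Sum>j=1..q. bartlett q j * (\<integral>\<omega>. gamma_hat n (\<lambda>i. \<mu> + c i + Y (int i) \<omega>) j \<partial>M))"
    unfolding lrv
    by (subst Bochner_Integration.integral_add) (auto intro!: igh integrable_mult_right
        Bochner_Integration.integrable_sum simp: Bochner_Integration.integral_sum igh)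
  also have "\<dots> \<le> b 0 + 2 * (\<Sum>j=1..q. b j)"
  proof -
    have "bartlett q j * (\<integral>\<omega>. gamma_hat n (\<lambda>i. \<mu> + c i + Y (int i) \<omega>) j \<partial>M) \<le> b j" if "j \<in> {1..q}" for j
    proof -
      have w: "0 \<le> bartlett q j" "bartlett q j \<le> 1"
        using that by (auto simp: bartlett_def field_simps)
      have "bartlett q j * (\<integral>\<omega>. gamma_hat n (\<lambda>i. \<mu> + c i + Y (int i) \<omega>) j \<partial>M)
          \<le> bartlett q j * \<bar>\<integral>\<omega>. gamma_hat n (\<lambda>i. \<mu> + c i + Y (int i) \<omega>) j \<partial>M\<bar>"
        using w by (intro mult_left_mono) auto
      also have "\<dots> \<le> 1 * b j" using w Egh[of j] by (intro mult_mono) auto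
      finally show ?thesis by simp
    qed
    then have "(\<Sum>j=1..q. bartlett q j * (\<integral>\<omega>. gamma_hat n (\<lambda>i. \<mu> + c i + Y (int i) \<omega>) j \<partial>M)) \<le> (\<Sum>j=1..q. b j)"
      by (rule sum_mono)
    then show ?thesis using Egh[of 0] by linarith
  qed
  also have "\<dots> \<le> (2 * real q + 1) * (D\<^sup>2 + 3 * GG / real n) + 2 * GG"
  proof -
    have s0: "(\<Sum>j=0..q. \<bar>g (int j)\<bar>) \<le> GG"
      unfolding g_def by (rule gsum_bound) (auto simp: inj_on_def)
    have "(\<Sum>j=0..q. \<bar>g (int j)\<bar>) = \<bar>g 0\<bar> + (\<Sum>j=1..q. \<bar>g (int j)\<bar>)"
      by (simp add: sum.atLeast_Suc_atMost)
    with s0 have s1: "\<bar>g 0\<bar> + 2 * (\<Sum>j=1..q. \<bar>g (int j)\<bar>) \<le> 2 * GG"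
      using abs_ge_zero[of "g 0"] by linarith
    have "b 0 + 2 * (\<Sum>j=1..q. b j) = (2 * real q + 1) * (D\<^sup>2 + 3 * GG / real n)
        + (\<bar>g 0\<bar> + 2 * (\<Sum>j=1..q. \<bar>g (int j)\<bar>))"
      by (simp add: b_def sum.distrib algebra_simps add_divide_distrib)
    then show ?thesis using s1 by linarith
  qed
  finally show ?thesis using ilrv by simp
qed

end

theorem propositionD1:
  fixes M :: "'a measure" and Y :: "int \<Rightarrow> 'a \<Rightarrow> real"
    and N :: "'b measure" and W :: "real \<Rightarrow> 'b \<Rightarrow> real"
    and \<sigma> \<mu> \<theta> :: real and \<Delta> :: "nat \<Rightarrow> real" and q :: "nat \<Rightarrow> nat"
    and kstar :: "nat \<Rightarrow> nat" and X :: "nat \<Rightarrow> nat \<Rightarrow> 'a \<Rightarrow> real"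
  assumes M: "prob_space M"
    and stat: "fourth_order_stationary M Y"
    and mean0: "\<And>k. (\<integral>\<omega>. Y k \<omega> \<partial>M) = 0"
    and BM: "std_brownian_motion N W"
    and sigma_pos: "\<sigma> > 0"
    and FCLT: "converges_in_dist_D M (partial_sum_process Y) N (\<lambda>\<omega> t. \<sigma> * W t \<omega>)"
    and gamma_summable: "(\<lambda>j. \<bar>autocov M Y j\<bar>) summable_on UNIV"
    and cum_bounded: "\<exists>B. \<forall>h. (\<lambda>(r, s). \<bar>cum4 M Y h r s\<bar>) summable_on UNIV \<and>
                           (\<Sum>\<^sub>\<infinity>(r, s). \<bar>cum4 M Y h r s\<bar>) \<le> B"
    and theta: "0 < \<theta>" "\<theta> < 1"
    and kstar_def: "\<And>n. kstar n = nat \<lfloor>real n * \<theta>\<rfloor>"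
    and X_def: "\<And>n i \<omega>. X n i \<omega> = \<mu> + (if i \<le> kstar n then 0 else \<Delta> n) + Y (int i) \<omega>"
    and q_pos: "\<And>n. q n > 0"
    and n_Delta: "filterlim (\<lambda>n. real n * (\<Delta> n)\<^sup>2) at_top sequentially"
    and khat_rate: "bounded_in_prob M
          (\<lambda>n \<omega>. (\<Delta> n)\<^sup>2 * \<bar>real (khat n (\<lambda>i. X n i \<omega>)) - real (kstar n)\<bar>)"
    and q_Delta: "(\<lambda>n. real (q n) * (\<Delta> n)\<^sup>2) \<in> O(\<lambda>_. 1)"
    and q_infty: "filterlim q at_top sequentially"
    and q_small: "(\<lambda>n. real (q n) / real n) \<longlonglongrightarrow> 0"
  shows "bounded_in_prob M (\<lambda>n \<omega>. lrv_est n (q n) (\<lambda>i. X n i \<omega>))"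
proof -
  interpret prob_space M by (rule M)
  define c where "c n i = (if i \<le> kstar n then 0 else \<Delta> n)" for n i
  define K where "K n = (2 * real (q n) + 1) * ((\<Delta> n)\<^sup>2 + 3 * GG M Y / real n) + 2 * GG M Y" for n
  define Z where "Z n \<omega> = lrv_est n (q n) (\<lambda>i. X n i \<omega>)" for n \<omega>
  have Zeq: "Z n \<omega> = lrv_est n (q n) (\<lambda>i. \<mu> + c n i + Y (int i) \<omega>)" for n \<omega>
    unfolding Z_def c_def by (simp add: X_def)
  have EZ: "integrable M (Z n) \<and> (\<integral>\<omega>. Z n \<omega> \<partial>M) \<le> K n" if "n \<ge> 1" for n
  proof -
    have "\<And>i k. \<bar>c n i - c n k\<bar> \<le> \<bar>\<Delta> n\<bar>" by (auto simp: c_def)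
    from Elrv[where c="c n" and D="\<bar>\<Delta> n\<bar>" and q="q n" and \<mu>=\<mu>, OF M stat mean0 gamma_summable that this]
    show ?thesis by (simp add: Zeq[abs_def] K_def)
  qed
  obtain C where C: "C > 0" "eventually (\<lambda>n. norm (real (q n) * (\<Delta> n)\<^sup>2) \<le> C * norm (1::real)) sequentially"
    using q_Delta by (elim landau_o.bigE)
  have ev1: "eventually (\<lambda>n. real (q n) / real n < 1) sequentially"
    using q_small by (rule order_tendstoD) simp
  have ev2: "eventually (\<lambda>n. n \<ge> 1) sequentially" by (rule eventually_ge_at_top)
  define K0 where "K0 = 3 * C + 11 * GG M Y"
  have G0: "0 \<le> GG M Y" by (rule GG_nonneg[OF M stat mean0 gamma_summable])
  have evK: "eventually (\<lambda>n. n \<ge> 1 \<and> integrable M (Z n) \<and> (\<integral>\<omega>. Z n \<omega> \<partial>M) \<le> K0) sequentially"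
    using C(2) ev1 ev2
  proof eventually_elim
    case (elim n)
    have qn: "1 \<le> real (q n)" using q_pos[of n] by simp
    have d0: "0 \<le> (\<Delta> n)\<^sup>2" by simp
    have h1: "real (q n) * (\<Delta> n)\<^sup>2 \<le> C" using elim(1) by simp
    have "(2 * real (q n) + 1) * (\<Delta> n)\<^sup>2 \<le> (3 * real (q n)) * (\<Delta> n)\<^sup>2"
      using qn d0 by (intro mult_right_mono) auto
    also have "\<dots> \<le> 3 * C" using h1 by simp
    finally have a1: "(2 * real (q n) + 1) * (\<Delta> n)\<^sup>2 \<le> 3 * C" .
    have npos: "0 < real n" using elim(3) by simp
    have "(2 * real (q n) + 1) * (3 * GG M Y / real n) \<le> (3 * real (q n)) * (3 * GG M Y / real n)"
      using qn G0 npos by (intro mult_right_mono) auto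
    also have "\<dots> = 9 * GG M Y * (real (q n) / real n)" by simp
    also have "\<dots> \<le> 9 * GG M Y * 1"
      using elim(2) G0 by (intro mult_left_mono) auto
    finally have a2: "(2 * real (q n) + 1) * (3 * GG M Y / real n) \<le> 9 * GG M Y" by simp
    have "K n \<le> K0" unfolding K_def K0_def using a1 a2 by (simp add: distrib_left)
    then show ?case using EZ[OF elim(3)] elim(3) by auto
  qed
  show ?thesis
    unfolding bounded_in_prob_def Z_def[symmetric]
  proof (intro allI impI)
    fix \<epsilon> :: real assume eps: "\<epsilon> > 0"
    define K1 where "K1 = \<bar>K0\<bar> + 1"
    define B where "B = 2 * K1 / \<epsilon>"
    have K1: "K1 > 0" "K0 \<le> K1" unfolding K1_def by auto
    have Bpos: "B > 0" unfolding B_def using K1 eps by simp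
    show "\<exists>B. \<forall>\<^sub>F n in sequentially. measure M {\<omega> \<in> space M. B < \<bar>Z n \<omega>\<bar>} < \<epsilon>"
    proof (intro exI[of _ B])
      show "\<forall>\<^sub>F n in sequentially. measure M {\<omega> \<in> space M. B < \<bar>Z n \<omega>\<bar>} < \<epsilon>"
        using evK
      proof eventually_elim
        case (elim n)
        have nn: "0 \<le> Z n \<omega>" for \<omega> unfolding Z_def by (rule lrv_nonneg)
        have meas: "Z n \<in> borel_measurable M" using elim by auto
        have "measure M {\<omega> \<in> space M. B < \<bar>Z n \<omega>\<bar>} \<le> measure M {\<omega> \<in> space M. Z n \<omega> \<ge> B}"
          using nn meas by (intro finite_measure_mono) auto
        also have "\<dots> \<le> (\<integral>\<omega>. Z n \<omega> \<partial>M) / B"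
          by (rule integral_Markov_inequality_measure[where A="{}"]) (use elim nn Bpos in auto)
        also have "\<dots> \<le> K1 / B"
          using elim K1 Bpos by (intro divide_right_mono) auto
        also have "\<dots> = \<epsilon> / 2" unfolding B_def using K1 eps by simp
        also have "\<dots> < \<epsilon>" using eps by simp
        finally show ?case .
      qed
    qed
  qed
qed

end
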